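(* Let $\xi(0),\xi(1),\xi(2),\dots$ be a sequence of vectors $\xi(k)=(\xi_1(k),\dots,\xi_d(k))\in\mathbb{R}^d$. For $\nu\geq 1$, $n\geq 1$ and $1\leq i_1,\dots,i_\nu\leq d$ define the iterated sum \[ \Sigma^{i_1,\dots,i_\nu}(n)=\sum_{0\leq k_1<\dots<k_\nu<n}\xi_{i_1}(k_1)\xi_{i_2}(k_2)\cdots\xi_{i_\nu}(k_\nu). \] Suppose that \[ \limsup_{n\to\infty} n^{-1}\sum_{k=0}^n|\xi(k)|=R<\infty \] and that the limit \[ \lim_{n\to\infty}n^{-1}\sum_{k=0}^n\xi(k)=Q=(Q_1,\dots,Q_d) \] exists with $|Q|<\infty$. Then for any $\nu\geq1$ and any $1\leq i_1,\dots,i_\nu\leq d$, \[ \lim_{n\to\infty}n^{-\nu}\Sigma^{i_1,\dots,i_\nu}(n)=\frac 1{\nu !}\prod_{j=1}^\nu Q_{i_j}. \]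
   Context: $|\cdot|$ denotes the Euclidean norm on $\mathbb{R}^d$. *)

theory Defs
  imports "HOL-Analysis.Analysis" "HOL-Library.Extended_Real"
begin

definition iter_sum :: "(nat \<Rightarrow> real ^ 'd) \<Rightarrow> 'd list \<Rightarrow> nat \<Rightarrow> real" where
  "iter_sum \<xi> is n =
     (\<Sum>ks \<in> {ks. length ks = length is \<and> sorted_wrt (<) ks \<and> (\<forall>k\<in>set ks. k < n)}.
        \<Prod>j<length is. \<xi> (ks ! j) $ (is ! j))"

end

theory Submission
  imports Defs
begin


lemma pow_step_bounds:
  fixes x :: real assumes "x \<ge> 0"
  shows "real (Suc m) * x ^ m \<le> (x+1)^Suc m - x^Suc m"
    and "(x+1)^Suc m - x^Suc m \<le> real (Suc m) * (x+1) ^ m"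
proof -
  have eq: "(x+1)^Suc m - x^Suc m = (\<Sum>i<Suc m. x ^ (Suc m - Suc i) * (x+1) ^ i)"
    using power_diff_sumr2[of "x+1" "Suc m" x] by simp
  have lo: "x ^ m \<le> x ^ (Suc m - Suc i) * (x+1) ^ i" if "i < Suc m" for i
  proof -
    have "x ^ m = x ^ (Suc m - Suc i) * x ^ i" using that by (simp add: power_add[symmetric])
    also have "\<dots> \<le> x ^ (Suc m - Suc i) * (x+1) ^ i"
      by (intro mult_left_mono power_mono) (use assms in auto)
    finally show ?thesis .
  qed
  have hi: "x ^ (Suc m - Suc i) * (x+1) ^ i \<le> (x+1) ^ m" if "i < Suc m" for i
  proof -
    have "x ^ (Suc m - Suc i) * (x+1) ^ i \<le> (x+1) ^ (Suc m - Suc i) * (x+1) ^ i"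
      by (intro mult_right_mono power_mono) (use assms in auto)
    also have "\<dots> = (x+1)^m" using that by (simp add: power_add[symmetric])
    finally show ?thesis .
  qed
  show "real (Suc m) * x ^ m \<le> (x+1)^Suc m - x^Suc m"
  proof -
    have "of_nat (card {..<Suc m}) * x^m \<le> (\<Sum>i<Suc m. x ^ (Suc m - Suc i) * (x+1) ^ i)"
      by (rule sum_bounded_below) (use lo in auto)
    then show ?thesis unfolding eq by simp
  qed
  show "(x+1)^Suc m - x^Suc m \<le> real (Suc m) * (x+1) ^ m"
  proof -
    have "(\<Sum>i<Suc m. x ^ (Suc m - Suc i) * (x+1) ^ i) \<le> of_nat (card {..<Suc m}) * (x+1)^m"
      by (rule sum_bounded_above) (use hi in auto)
    then show ?thesis unfolding eq by simp
  qed
qed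

lemma pow_sum_bounds:
  shows "real (Suc m) * (\<Sum>k<n. real k ^ m) \<le> real n ^ Suc m"
    and "real n ^ Suc m \<le> real (Suc m) * ((\<Sum>k<n. real k ^ m) + real n ^ m)"
proof -
  have tel: "real n ^ Suc m = (\<Sum>k<n. real (Suc k) ^ Suc m - real k ^ Suc m)"
    by (subst sum_lessThan_telescope[of "\<lambda>k. real k ^ Suc m"]) simp
  show "real (Suc m) * (\<Sum>k<n. real k ^ m) \<le> real n ^ Suc m"
    unfolding tel sum_distrib_left
    by (rule sum_mono) (use pow_step_bounds(1)[of "real k" m for k] in \<open>auto simp: add.commute\<close>)
  have ind: "(\<Sum>k<n. real (Suc k) ^ m) \<le> (\<Sum>k<n. real k ^ m) + real n ^ m"
  proof (induction n)
    case (Suc n)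
    then show ?case by simp
  qed simp
  have "real n ^ Suc m \<le> real (Suc m) * (\<Sum>k<n. real (Suc k) ^ m)"
    unfolding tel sum_distrib_left
    by (rule sum_mono) (use pow_step_bounds(2)[of "real k" m for k] in \<open>auto simp: add.commute\<close>)
  also have "\<dots> \<le> real (Suc m) * ((\<Sum>k<n. real k ^ m) + real n ^ m)"
    by (rule mult_left_mono[OF ind]) simp
  finally show "real n ^ Suc m \<le> real (Suc m) * ((\<Sum>k<n. real k ^ m) + real n ^ m)" .
qed

lemma pow_sum_limit:
  "(\<lambda>n. (\<Sum>k<n. real k ^ m) / real n ^ Suc m) \<longlonglongrightarrow> 1 / real (Suc m)"
proof (rule tendsto_sandwich[of "\<lambda>n. 1 / real (Suc m) - 1 / real n" _ _ "\<lambda>n. 1 / real (Suc m)"])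
  show "\<forall>\<^sub>F n in sequentially. 1 / real (Suc m) - 1 / real n \<le> (\<Sum>k<n. real k ^ m) / real n ^ Suc m"
    using eventually_ge_at_top[of 1]
  proof eventually_elim
    case (elim n)
    have pos: "real n ^ Suc m > 0" using elim by simp
    have "real n ^ Suc m \<le> real (Suc m) * ((\<Sum>k<n. real k ^ m) + real n ^ m)"
      by (rule pow_sum_bounds(2))
    then have "real n ^ Suc m / real (Suc m) - real n ^ m \<le> (\<Sum>k<n. real k ^ m)"
      by (simp add: field_simps)
    then have "(real n ^ Suc m / real (Suc m) - real n ^ m) / real n ^ Suc m \<le> (\<Sum>k<n. real k ^ m) / real n ^ Suc m"
      using pos by (simp add: divide_right_mono)
    moreover have "(real n ^ Suc m / real (Suc m) - real n ^ m) / real n ^ Suc m = 1 / real (Suc m) - 1 / real n"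
    proof -
      have "real n ^ m \<noteq> 0" "real n \<noteq> 0" using elim by auto
      then show ?thesis by (simp add: field_simps del: of_nat_Suc)
    qed
    ultimately show ?case by simp
  qed
  show "\<forall>\<^sub>F n in sequentially. (\<Sum>k<n. real k ^ m) / real n ^ Suc m \<le> 1 / real (Suc m)"
    using eventually_ge_at_top[of 1]
  proof eventually_elim
    case (elim n)
    have pos: "real n ^ Suc m > 0" using elim by simp
    show ?case using pow_sum_bounds(1)[of m n] pos by (simp add: field_simps)
  qed
  show "(\<lambda>n. 1 / real (Suc m) - 1 / real n) \<longlonglongrightarrow> 1 / real (Suc m)"
    using tendsto_diff[OF tendsto_const lim_const_over_n[of 1]] by simp
qed simp



lemma small_weighted_sum:
  fixes p s g h :: "nat \<Rightarrow> real"
  assumes g0: "\<forall>k. 0 \<le> g k" and gmono: "mono g" and h0: "\<forall>n. 0 \<le> h n"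
    and small: "\<forall>\<epsilon>>0. \<exists>K. \<forall>k\<ge>K. \<bar>s k\<bar> \<le> \<epsilon> * g k"
    and bnd: "\<forall>\<^sub>F n in sequentially. (\<Sum>k<n. \<bar>p k\<bar>) \<le> C * h n"
    and inf: "filterlim (\<lambda>n. g n * h n) at_top sequentially"
  shows "(\<lambda>n. (\<Sum>k<n. p k * s k) / (g n * h n)) \<longlonglongrightarrow> 0"
  unfolding LIMSEQ_iff
proof (intro allI impI)
  fix \<epsilon> :: real assume ep: "\<epsilon> > 0"
  define C' where "C' = max C 1"
  have C'pos: "C' > 0" "C \<le> C'" unfolding C'_def by auto
  define c where "c = \<epsilon> / (2 * C')"
  have cpos: "c > 0" unfolding c_def using ep C'pos by auto
  obtain K where K: "\<forall>k\<ge>K. \<bar>s k\<bar> \<le> c * g k" using small cpos by blast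
  define M where "M = (\<Sum>k<K. \<bar>p k * s k\<bar>)"
  have M0: "M \<ge> 0" unfolding M_def by (simp add: sum_nonneg)
  have ev1: "\<forall>\<^sub>F n in sequentially. g n * h n \<ge> 2 * M / \<epsilon> + 1"
    using inf by (simp add: filterlim_at_top)
  have "\<forall>\<^sub>F n in sequentially. n \<ge> K \<and> g n * h n \<ge> 2 * M / \<epsilon> + 1 \<and> (\<Sum>k<n. \<bar>p k\<bar>) \<le> C * h n"
    using eventually_ge_at_top[of K] ev1 bnd by eventually_elim auto
  then obtain N where N: "\<And>n. n \<ge> N \<Longrightarrow> n \<ge> K \<and> g n * h n \<ge> 2 * M / \<epsilon> + 1 \<and> (\<Sum>k<n. \<bar>p k\<bar>) \<le> C * h n"
    unfolding eventually_sequentially by blast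
  show "\<exists>no. \<forall>n\<ge>no. norm ((\<Sum>k<n. p k * s k) / (g n * h n) - 0) < \<epsilon>"
  proof (intro exI allI impI)
    fix n assume "n \<ge> N"
    note Nn = N[OF this]
    define D where "D = g n * h n"
    have Dge: "D \<ge> 2 * M / \<epsilon> + 1" using Nn D_def by auto
    have Dpos: "D > 0" using Dge M0 ep by (smt (verit) divide_nonneg_pos)
    have trm: "\<bar>p k * s k\<bar> \<le> (if k < K then \<bar>p k * s k\<bar> else 0) + \<bar>p k\<bar> * (c * g n)"
      if "k < n" for k
    proof (cases "k < K")
      case True
      then show ?thesis using cpos g0 by (simp add: mult_nonneg_nonneg)
    next
      case False
      then have "\<bar>s k\<bar> \<le> c * g k" using K by auto
      also have "\<dots> \<le> c * g n" using gmono cpos that by (simp add: mono_def)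
      finally have "\<bar>p k\<bar> * \<bar>s k\<bar> \<le> \<bar>p k\<bar> * (c * g n)" by (simp add: mult_left_mono)
      then show ?thesis using False by (simp add: abs_mult)
    qed
    have "\<bar>\<Sum>k<n. p k * s k\<bar> \<le> (\<Sum>k<n. \<bar>p k * s k\<bar>)" by (rule sum_abs)
    also have "\<dots> \<le> (\<Sum>k<n. (if k < K then \<bar>p k * s k\<bar> else 0) + \<bar>p k\<bar> * (c * g n))"
      by (rule sum_mono) (use trm in auto)
    also have "\<dots> = (\<Sum>k<n. (if k < K then \<bar>p k * s k\<bar> else 0)) + c * g n * (\<Sum>k<n. \<bar>p k\<bar>)"
      by (simp add: sum.distrib sum_distrib_left sum_distrib_right mult_ac)
    also have "(\<Sum>k<n. (if k < K then \<bar>p k * s k\<bar> else 0)) = M"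
    proof -
      have "(\<Sum>k<n. (if k < K then \<bar>p k * s k\<bar> else 0)) = (\<Sum>k\<in>{..<n} \<inter> {k. k < K}. \<bar>p k * s k\<bar>)"
        by (simp add: sum.inter_restrict)
      also have "{..<n} \<inter> {k. k < K} = {..<K}" using Nn by auto
      finally show ?thesis unfolding M_def .
    qed
    also have "c * g n * (\<Sum>k<n. \<bar>p k\<bar>) \<le> c * g n * (C' * h n)"
    proof (rule mult_left_mono)
      show "(\<Sum>k<n. \<bar>p k\<bar>) \<le> C' * h n"
        using Nn C'pos h0 by (meson order_trans mult_right_mono)
      show "0 \<le> c * g n" using cpos g0 by simp
    qed
    also have "c * g n * (C' * h n) = \<epsilon> / 2 * D"
      unfolding c_def D_def using C'pos by (simp add: field_simps)
    finally have bound: "\<bar>\<Sum>k<n. p k * s k\<bar> \<le> M + \<epsilon> / 2 * D" by simp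
    have "M < \<epsilon> / 2 * D"
    proof -
      have "2 * M / \<epsilon> < D" using Dge by simp
      then have "2 * M < D * \<epsilon>" using ep by (simp add: divide_less_eq)
      then show ?thesis by (simp add: mult.commute)
    qed
    with bound have "\<bar>\<Sum>k<n. p k * s k\<bar> < \<epsilon> * D" by simp
    then show "norm ((\<Sum>k<n. p k * s k) / (g n * h n) - 0) < \<epsilon>"
      using Dpos unfolding D_def[symmetric] by (simp add: abs_div divide_less_eq)
  qed
qed

lemma abel_identity:
  fixes w e :: "nat \<Rightarrow> real"
  shows "(\<Sum>k<n. w k * (e (Suc k) - e k)) = w n * e n - w 0 * e 0 - (\<Sum>j<n. (w (Suc j) - w j) * e (Suc j))"
  by (induction n) (auto simp: algebra_simps)



lemma weighted_power:
  fixes a :: "nat \<Rightarrow> real"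
  assumes A: "(\<lambda>n. (\<Sum>k<n. a k) / real n) \<longlonglongrightarrow> q"
  shows "(\<lambda>n. (\<Sum>k<n. real k ^ m * a k) / real n ^ Suc m) \<longlonglongrightarrow> q / real (Suc m)"
proof -
  define e where "e n = (\<Sum>k<n. a k) - q * real n" for n
  have ae: "a k = q + (e (Suc k) - e k)" for k by (simp add: e_def algebra_simps)
  have e0: "e 0 = 0" by (simp add: e_def)
  have en: "(\<lambda>n. e n / real n) \<longlonglongrightarrow> 0"
  proof -
    have "(\<lambda>n. (\<Sum>k<n. a k) / real n - q) \<longlonglongrightarrow> q - q"
      by (intro tendsto_diff A tendsto_const)
    moreover have "\<forall>\<^sub>F n in sequentially. (\<Sum>k<n. a k) / real n - q = e n / real n"
      using eventually_ge_at_top[of 1] by eventually_elim (simp add: e_def field_simps)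
    ultimately show ?thesis by (simp add: tendsto_cong)
  qed
  define d where "d j = real (Suc j) ^ m - real j ^ m" for j
  have d0: "d j \<ge> 0" for j unfolding d_def by (simp add: power_mono)
  have dsum: "(\<Sum>j<n. d j) \<le> real n ^ m" for n
    unfolding d_def by (subst sum_lessThan_telescope[of "\<lambda>k. real k ^ m"]) simp
  have T: "(\<lambda>n. (\<Sum>j<n. d j * e (Suc j)) / real n ^ Suc m) \<longlonglongrightarrow> 0"
  proof -
    have G: "(\<lambda>n. (\<Sum>j<n. d j * e (Suc j)) / ((real n + 1) * real n ^ m)) \<longlonglongrightarrow> 0"
    proof (rule small_weighted_sum[where C=1])
      show "\<forall>k. 0 \<le> real k + 1" by simp
      show "mono (\<lambda>k. real k + 1 :: real)" by (auto intro: monoI)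
      show "\<forall>n. 0 \<le> real n ^ m" by simp
      show "\<forall>\<^sub>F n in sequentially. (\<Sum>k<n. \<bar>d k\<bar>) \<le> 1 * real n ^ m"
        using d0 dsum by simp
      show "\<forall>\<epsilon>>0. \<exists>K. \<forall>k\<ge>K. \<bar>e (Suc k)\<bar> \<le> \<epsilon> * (real k + 1)"
      proof (intro allI impI)
        fix \<epsilon> :: real assume "\<epsilon> > 0"
        then obtain no where no: "\<forall>n\<ge>no. \<bar>e n / real n\<bar> < \<epsilon>"
          using en unfolding LIMSEQ_iff by auto
        show "\<exists>K. \<forall>k\<ge>K. \<bar>e (Suc k)\<bar> \<le> \<epsilon> * (real k + 1)"
        proof (intro exI allI impI)
          fix k assume "k \<ge> no"
          then have "\<bar>e (Suc k) / real (Suc k)\<bar> < \<epsilon>" using no[rule_format, of "Suc k"] by linarith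
          then show "\<bar>e (Suc k)\<bar> \<le> \<epsilon> * (real k + 1)"
            by (simp add: abs_div divide_less_eq add.commute)
        qed
      qed
      show "filterlim (\<lambda>n. (real n + 1) * real n ^ m) at_top sequentially"
      proof (rule filterlim_at_top_mono[OF filterlim_real_sequentially])
        show "\<forall>\<^sub>F n in sequentially. real n \<le> (real n + 1) * real n ^ m"
          using eventually_ge_at_top[of 1]
        proof eventually_elim
          case (elim n)
          have "1 \<le> real n ^ m" using elim by simp
          then have "real n * 1 \<le> real n * real n ^ m" by (intro mult_left_mono) auto
          also have "\<dots> \<le> (real n + 1) * real n ^ m" by (simp add: mult_right_mono)
          finally show ?case by simp
        qed
      qed
    qed
    have R: "(\<lambda>n. (real n + 1) / real n) \<longlonglongrightarrow> 1"
    proof -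
      have "(\<lambda>n. 1 + 1 / real n) \<longlonglongrightarrow> 1 + 0"
        by (intro tendsto_add tendsto_const lim_const_over_n)
      moreover have "\<forall>\<^sub>F n in sequentially. 1 + 1 / real n = (real n + 1) / real n"
        using eventually_ge_at_top[of 1] by eventually_elim (simp add: field_simps)
      ultimately show ?thesis by (simp add: tendsto_cong)
    qed
    have "(\<lambda>n. (\<Sum>j<n. d j * e (Suc j)) / ((real n + 1) * real n ^ m) * ((real n + 1) / real n)) \<longlonglongrightarrow> 0 * 1"
      by (intro tendsto_mult G R)
    moreover have "\<forall>\<^sub>F n in sequentially. (\<Sum>j<n. d j * e (Suc j)) / ((real n + 1) * real n ^ m) * ((real n + 1) / real n)
        = (\<Sum>j<n. d j * e (Suc j)) / real n ^ Suc m"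
      using eventually_ge_at_top[of 1]
    proof eventually_elim
      case (elim n)
      then have nz: "real n \<noteq> 0" "real n ^ m \<noteq> 0" "real n + 1 \<noteq> 0" by auto
      have gen: "x / (a * P) * (a / b) = x / (b * P)" if "a \<noteq> 0" for x a b P :: real
        using that by (cases "P = 0"; cases "b = 0"; simp add: field_simps)
      show ?case using gen[OF nz(3)] by simp
    qed
    ultimately show ?thesis by (simp add: tendsto_cong mult.commute)
  qed
  have decomp: "(\<Sum>k<n. real k ^ m * a k) / real n ^ Suc m
      = q * ((\<Sum>k<n. real k ^ m) / real n ^ Suc m) + e n / real n - (\<Sum>j<n. d j * e (Suc j)) / real n ^ Suc m"
    if "n \<ge> 1" for n
  proof -
    have "(\<Sum>k<n. real k ^ m * a k) = q * (\<Sum>k<n. real k ^ m) + (\<Sum>k<n. real k ^ m * (e (Suc k) - e k))"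
    proof -
      have "real k ^ m * a k = q * real k ^ m + real k ^ m * (e (Suc k) - e k)" for k
        by (subst ae) (simp add: algebra_simps)
      then show ?thesis by (simp add: sum.distrib sum_distrib_left)
    qed
    also have "(\<Sum>k<n. real k ^ m * (e (Suc k) - e k)) = real n ^ m * e n - (\<Sum>j<n. d j * e (Suc j))"
      using abel_identity[of "\<lambda>k. real k ^ m" e n] e0 unfolding d_def by simp
    finally have "(\<Sum>k<n. real k ^ m * a k) = q * (\<Sum>k<n. real k ^ m) + real n ^ m * e n - (\<Sum>j<n. d j * e (Suc j))"
      by simp
    moreover have gen: "X / (N * P) = q * (S / (N * P)) + E / N - Dd / (N * P)"
      if "X = q * S + P * E - Dd" "N \<noteq> 0" "P \<noteq> 0" for X N P S E Dd :: real
      using that(2,3) unfolding that(1) by (simp add: field_simps)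
    ultimately show ?thesis using that by (simp only: power_Suc) (rule gen, auto)
  qed
  have "(\<lambda>n. q * ((\<Sum>k<n. real k ^ m) / real n ^ Suc m) + e n / real n - (\<Sum>j<n. d j * e (Suc j)) / real n ^ Suc m)
      \<longlonglongrightarrow> q * (1 / real (Suc m)) + 0 - 0"
    by (intro tendsto_diff tendsto_add tendsto_mult tendsto_const pow_sum_limit en T)
  moreover have "\<forall>\<^sub>F n in sequentially. q * ((\<Sum>k<n. real k ^ m) / real n ^ Suc m) + e n / real n - (\<Sum>j<n. d j * e (Suc j)) / real n ^ Suc m
      = (\<Sum>k<n. real k ^ m * a k) / real n ^ Suc m"
    using eventually_ge_at_top[of 1] by eventually_elim (rule decomp[symmetric], simp)
  ultimately show ?thesis by (simp add: tendsto_cong)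
qed

lemma weighted_general:
  fixes a b :: "nat \<Rightarrow> real"
  assumes A: "(\<lambda>n. (\<Sum>k<n. a k) / real n) \<longlonglongrightarrow> q"
    and B: "\<forall>\<^sub>F n in sequentially. (\<Sum>k<n. \<bar>a k\<bar>) \<le> C * real n"
    and b: "(\<lambda>k. b k / real k ^ m) \<longlonglongrightarrow> \<beta>"
  shows "(\<lambda>n. (\<Sum>k<n. b k * a k) / real n ^ Suc m) \<longlonglongrightarrow> \<beta> * q / real (Suc m)"
proof -
  define r where "r k = b k - \<beta> * real k ^ m" for k
  have G: "(\<lambda>n. (\<Sum>k<n. a k * r k) / (real n ^ m * real n)) \<longlonglongrightarrow> 0"
  proof (rule small_weighted_sum[where C=C])
    show "\<forall>k. 0 \<le> real k ^ m" by simp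
    show "mono (\<lambda>k. real k ^ m)" by (auto intro!: monoI power_mono)
    show "\<forall>n. 0 \<le> real n" by simp
    show "\<forall>\<^sub>F n in sequentially. (\<Sum>k<n. \<bar>a k\<bar>) \<le> C * real n" by (rule B)
    show "\<forall>\<epsilon>>0. \<exists>K. \<forall>k\<ge>K. \<bar>r k\<bar> \<le> \<epsilon> * real k ^ m"
    proof (intro allI impI)
      fix \<epsilon> :: real assume "\<epsilon> > 0"
      then obtain no where no: "\<forall>n\<ge>no. \<bar>b n / real n ^ m - \<beta>\<bar> < \<epsilon>"
        using b unfolding LIMSEQ_iff by auto
      show "\<exists>K. \<forall>k\<ge>K. \<bar>r k\<bar> \<le> \<epsilon> * real k ^ m"
      proof (intro exI[of _ "max no 1"] allI impI)
        fix k assume k: "max no 1 \<le> k"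
        then have pos: "real k ^ m > 0" by simp
        have "\<bar>b k / real k ^ m - \<beta>\<bar> < \<epsilon>" using no k by auto
        moreover have "b k / real k ^ m - \<beta> = r k / real k ^ m"
          unfolding r_def using pos by (simp add: field_simps)
        ultimately have "\<bar>r k\<bar> / real k ^ m < \<epsilon>" by (simp add: abs_div)
        then show "\<bar>r k\<bar> \<le> \<epsilon> * real k ^ m" using pos by (simp add: divide_less_eq)
      qed
    qed
    show "filterlim (\<lambda>n. real n ^ m * real n) at_top sequentially"
    proof (rule filterlim_at_top_mono[OF filterlim_real_sequentially])
      show "\<forall>\<^sub>F n in sequentially. real n \<le> real n ^ m * real n"
        using eventually_ge_at_top[of 1]
      proof eventually_elim
        case (elim n)
        have one: "1 \<le> real n ^ m" using elim by simp
        show ?case using mult_right_mono[OF one, of "real n"] by simp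
      qed
    qed
  qed
  have P: "(\<lambda>n. (\<Sum>k<n. real k ^ m * a k) / real n ^ Suc m) \<longlonglongrightarrow> q / real (Suc m)"
    by (rule weighted_power[OF A])
  have "(\<lambda>n. \<beta> * ((\<Sum>k<n. real k ^ m * a k) / real n ^ Suc m) + (\<Sum>k<n. a k * r k) / (real n ^ m * real n))
      \<longlonglongrightarrow> \<beta> * (q / real (Suc m)) + 0"
    by (intro tendsto_add tendsto_mult tendsto_const P G)
  moreover have "\<beta> * ((\<Sum>k<n. real k ^ m * a k) / real n ^ Suc m) + (\<Sum>k<n. a k * r k) / (real n ^ m * real n)
      = (\<Sum>k<n. b k * a k) / real n ^ Suc m" for n
  proof -
    have "(\<Sum>k<n. b k * a k) = \<beta> * (\<Sum>k<n. real k ^ m * a k) + (\<Sum>k<n. a k * r k)"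
      unfolding r_def by (simp add: algebra_simps sum.distrib sum_distrib_left sum_subtractf)
    then show ?thesis by (simp add: add_divide_distrib mult.commute)
  qed
  ultimately show ?thesis by simp
qed



definition SL :: "nat \<Rightarrow> nat \<Rightarrow> nat list set" where
  "SL l n = {ks. length ks = l \<and> sorted_wrt (<) ks \<and> (\<forall>k\<in>set ks. k < n)}"

lemma SL_finite: "finite (SL l n)"
proof (rule finite_subset)
  show "SL l n \<subseteq> {xs. set xs \<subseteq> {..<n} \<and> length xs = l}" unfolding SL_def by auto
  show "finite {xs. set xs \<subseteq> {..<n} \<and> length xs = l}" by (rule finite_lists_length_eq) simp
qed

lemma SL_0: "SL 0 n = {[]}" unfolding SL_def by auto

lemma SL_Suc_0: "SL (Suc l) 0 = {}" unfolding SL_def by (auto simp: length_Suc_conv)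

lemma SL_Suc: "SL (Suc l) (Suc n) = SL (Suc l) n \<union> (\<lambda>ks. ks @ [n]) ` SL l n"
proof
  show "SL (Suc l) (Suc n) \<subseteq> SL (Suc l) n \<union> (\<lambda>ks. ks @ [n]) ` SL l n"
  proof
    fix ks assume ks: "ks \<in> SL (Suc l) (Suc n)"
    then have "ks \<noteq> []" unfolding SL_def by auto
    then obtain ys y where ksy: "ks = ys @ [y]" by (metis rev_exhaust)
    have len: "length ys = l" and sy: "sorted_wrt (<) ys" and lt: "\<forall>x\<in>set ys. x < y"
      and bd: "\<forall>x\<in>set ys. x < Suc n" "y < Suc n"
      using ks unfolding SL_def ksy by (auto simp: sorted_wrt_append)
    show "ks \<in> SL (Suc l) n \<union> (\<lambda>ks. ks @ [n]) ` SL l n"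
    proof (cases "y = n")
      case True
      then have "ys \<in> SL l n" unfolding SL_def using len sy lt by auto
      then show ?thesis unfolding ksy True by auto
    next
      case False
      then have "y < n" using bd by auto
      then have "ks \<in> SL (Suc l) n" using ks lt unfolding SL_def ksy by auto
      then show ?thesis by auto
    qed
  qed
  show "SL (Suc l) n \<union> (\<lambda>ks. ks @ [n]) ` SL l n \<subseteq> SL (Suc l) (Suc n)"
    unfolding SL_def by (auto simp: sorted_wrt_append less_Suc_eq)
qed

lemma iter_sum_SL: "iter_sum \<xi> is n = (\<Sum>ks\<in>SL (length is) n. \<Prod>j<length is. \<xi> (ks ! j) $ (is ! j))"
  unfolding iter_sum_def SL_def by simp

lemma iter_sum_Nil: "iter_sum \<xi> [] n = 1"
  unfolding iter_sum_SL by (simp add: SL_0)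

lemma iter_sum_snoc:
  "iter_sum \<xi> (is @ [i]) n = (\<Sum>k<n. iter_sum \<xi> is k * \<xi> k $ i)"
proof (induction n)
  case 0
  then show ?case unfolding iter_sum_SL by (simp add: SL_Suc_0)
next
  case (Suc n)
  define l where "l = length is"
  define f where "f ks = (\<Prod>j<Suc l. \<xi> (ks ! j) $ ((is @ [i]) ! j))" for ks
  have disj: "SL (Suc l) n \<inter> (\<lambda>ks. ks @ [n]) ` SL l n = {}"
    unfolding SL_def by auto
  have inj: "inj_on (\<lambda>ks. ks @ [n]) (SL l n)" by (auto simp: inj_on_def)
  have fimg: "f (ks @ [n]) = (\<Prod>j<l. \<xi> (ks ! j) $ (is ! j)) * \<xi> n $ i" if "ks \<in> SL l n" for ks
  proof -
    have lks: "length ks = l" using that unfolding SL_def by auto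
    have "f (ks @ [n]) = (\<Prod>j<l. \<xi> ((ks @ [n]) ! j) $ ((is @ [i]) ! j)) * \<xi> n $ i"
      unfolding f_def using lks l_def by (simp add: nth_append)
    also have "(\<Prod>j<l. \<xi> ((ks @ [n]) ! j) $ ((is @ [i]) ! j)) = (\<Prod>j<l. \<xi> (ks ! j) $ (is ! j))"
      by (rule prod.cong) (use lks l_def in \<open>auto simp: nth_append\<close>)
    finally show ?thesis .
  qed
  have "iter_sum \<xi> (is @ [i]) (Suc n) = (\<Sum>ks\<in>SL (Suc l) (Suc n). f ks)"
    unfolding iter_sum_SL f_def l_def by simp
  also have "\<dots> = (\<Sum>ks\<in>SL (Suc l) n. f ks) + (\<Sum>ks\<in>(\<lambda>ks. ks @ [n]) ` SL l n. f ks)"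
    unfolding SL_Suc by (rule sum.union_disjoint) (use SL_finite disj in auto)
  also have "(\<Sum>ks\<in>SL (Suc l) n. f ks) = iter_sum \<xi> (is @ [i]) n"
    unfolding iter_sum_SL f_def l_def by simp
  also have "(\<Sum>ks\<in>(\<lambda>ks. ks @ [n]) ` SL l n. f ks) = (\<Sum>ks\<in>SL l n. f (ks @ [n]))"
    by (rule sum.reindex[OF inj, unfolded comp_def])
  also have "\<dots> = (\<Sum>ks\<in>SL l n. (\<Prod>j<l. \<xi> (ks ! j) $ (is ! j))) * \<xi> n $ i"
    by (simp add: fimg sum_distrib_right)
  also have "(\<Sum>ks\<in>SL l n. (\<Prod>j<l. \<xi> (ks ! j) $ (is ! j))) = iter_sum \<xi> is n"
    unfolding iter_sum_SL l_def ..
  finally show ?case using Suc.IH by simp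
qed



theorem theorem2p1:
  fixes \<xi> :: "nat \<Rightarrow> real ^ 'd" and Q :: "real ^ 'd" and "is" :: "'d list"
  assumes "limsup (\<lambda>n. ereal ((\<Sum>k=0..n. norm (\<xi> k)) / real n)) < \<infinity>"
    and "(\<lambda>n. (1 / real n) *\<^sub>R (\<Sum>k=0..n. \<xi> k)) \<longlonglongrightarrow> Q"
    and "length is \<ge> 1"
  shows "(\<lambda>n. iter_sum \<xi> is n / real n ^ length is)
           \<longlonglongrightarrow> (1 / fact (length is)) * (\<Prod>j<length is. Q $ (is ! j))"
proof -
  obtain N :: nat where "limsup (\<lambda>n. ereal ((\<Sum>k=0..n. norm (\<xi> k)) / real n)) < ereal (real N)"
  proof -
    have "limsup (\<lambda>n. ereal ((\<Sum>k=0..n. norm (\<xi> k)) / real n)) \<noteq> \<infinity>" using assms(1) by simp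
    then show ?thesis using that unfolding less_PInf_Ex_of_nat by blast
  qed
  then have "\<forall>\<^sub>F n in sequentially. ereal ((\<Sum>k=0..n. norm (\<xi> k)) / real n) < ereal (real N)"
    by (rule Limsup_lessD)
  then have evc: "\<forall>\<^sub>F n in sequentially. (\<Sum>k=0..n. norm (\<xi> k)) / real n < real N"
    by (rule eventually_mono) simp
  have B: "\<forall>\<^sub>F n in sequentially. (\<Sum>k<n. \<bar>\<xi> k $ i\<bar>) \<le> real N * real n" for i
    using evc eventually_ge_at_top[of 1]
  proof eventually_elim
    case (elim n)
    have "(\<Sum>k<n. \<bar>\<xi> k $ i\<bar>) \<le> (\<Sum>k<n. norm (\<xi> k))"
      by (rule sum_mono) (rule component_le_norm_cart)
    also have "\<dots> \<le> (\<Sum>k=0..n. norm (\<xi> k))"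
      by (rule sum_mono2) auto
    also have "\<dots> \<le> real N * real n"
      using elim by (simp add: divide_less_eq)
    finally show ?case .
  qed
  have A: "(\<lambda>n. (\<Sum>k<n. \<xi> k $ i) / real n) \<longlonglongrightarrow> Q $ i" for i
  proof -
    have g: "(\<lambda>n. (\<Sum>k=0..n. \<xi> k $ i) / real n) \<longlonglongrightarrow> Q $ i"
      using tendsto_vec_nth[OF assms(2), of i] by (simp add: sum_component)
    have "(\<lambda>n. (\<Sum>k=0..n. \<xi> k $ i) / real n * (real n / real (Suc n))) \<longlonglongrightarrow> Q $ i * 1"
      by (intro tendsto_mult g LIMSEQ_n_over_Suc_n)
    moreover have "\<forall>\<^sub>F n in sequentially. (\<Sum>k=0..n. \<xi> k $ i) / real n * (real n / real (Suc n)) = (\<Sum>k<Suc n. \<xi> k $ i) / real (Suc n)"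
      using eventually_ge_at_top[of 1]
    proof eventually_elim
      case (elim n)
      have "(\<Sum>k=0..n. \<xi> k $ i) = (\<Sum>k<Suc n. \<xi> k $ i)"
        by (simp only: atLeast0AtMost lessThan_Suc_atMost)
      then show ?case using elim by simp
    qed
    ultimately have "(\<lambda>n. (\<Sum>k<Suc n. \<xi> k $ i) / real (Suc n)) \<longlonglongrightarrow> Q $ i"
      by (simp add: Lim_transform_eventually)
    then show ?thesis by (rule LIMSEQ_imp_Suc)
  qed
  have main: "(\<lambda>n. iter_sum \<xi> js n / real n ^ length js)
           \<longlonglongrightarrow> (1 / fact (length js)) * (\<Prod>j<length js. Q $ (js ! j))" for js
  proof (induction js rule: rev_induct)
    case Nil
    then show ?case by (simp add: iter_sum_Nil)
  next
    case (snoc i js)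
    define m where "m = length js"
    define \<beta> where "\<beta> = (1 / fact m) * (\<Prod>j<m. Q $ (js ! j))"
    have "(\<lambda>n. (\<Sum>k<n. iter_sum \<xi> js k * \<xi> k $ i) / real n ^ Suc m) \<longlonglongrightarrow> \<beta> * Q $ i / real (Suc m)"
      by (rule weighted_general[OF A B]) (use snoc.IH in \<open>simp add: m_def \<beta>_def\<close>)
    moreover have "\<beta> * Q $ i / real (Suc m) = (1 / fact (Suc m)) * (\<Prod>j<Suc m. Q $ ((js @ [i]) ! j))"
    proof -
      have "(\<Prod>j<Suc m. Q $ ((js @ [i]) ! j)) = (\<Prod>j<m. Q $ (js ! j)) * Q $ i"
        by (simp add: m_def nth_append)
      then show ?thesis unfolding \<beta>_def by (simp add: field_simps)
    qed
    ultimately show ?case by (simp add: iter_sum_snoc m_def)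
  qed
  show ?thesis by (rule main)
qed

end
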